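(* Let $d_1,\ldots,d_n\in\mathbb C[t,u]$ be the singular factors of $\phi$ and let $\psi:\mathbb P^1\to\mathbb P^1$, $(t':u')\mapsto(\alpha t'+\beta u':\delta t'+\gamma u')$ with $\alpha\gamma-\beta\delta\ne0$, be a linear change of coordinates, with associated graded ring isomorphism $\psi^\sharp:\mathbb C[t,u]\to\mathbb C[t',u']$, $t\mapsto(\gamma t'-\beta u')/(\alpha\gamma-\beta\delta)$, $u\mapsto(\delta t'-\alpha u')/(\alpha\gamma-\beta\delta)$. Then $\psi^\sharp(d_1),\ldots,\psi^\sharp(d_n)$ are the singular factors of the parameterization $\phi\circ\psi$ of $\mathcal C$.
   Context: Let $a,b,c\in\mathbb C[s,v]$ be homogeneous of the same degree $n\ge3$, $\gcd(a,b,c)=1$, with $\phi=(a:b:c):\mathbb P^1\to\mathbb P^2$ birational onto its image $\mathcal C$. A $\mu$-basis is a homogeneous basis $p,q$ (degrees $\mu\le n-\mu$) of the free syzygy module of $(a,b,c)$; $p_\phi(s,v;t,u)=\sum_ip_i(s,v)\,\phi_i(t,u)$, $q_\phi(s,v;t,u)=\sum_iq_i(s,v)\,\phi_i(t,u)$ where $(\phi_1,\phi_2,\phi_3)=(a,b,c)$. $S_{p_\phi,q_\phi}(t,u)$ is their $n\times n$ Sylvester matrix with respect to $(s,v)$. The singular factors of $\phi$ are homogeneous $d_1,\ldots,d_n\in\mathbb C[t,u]$ such that for each $i$, $d_n^{n-i+1}\cdots d_{i+1}^2d_i$ equals (up to nonzero constant) the gcd of the $(n+1-i)$-minors of $S_{p_\phi,q_\phi}(t,u)$.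 *)

theory Defs
  imports "HOL-Computational_Algebra.Polynomial" "Jordan_Normal_Form.Determinant"
    "Jordan_Normal_Form.DL_Submatrix"
begin

text \<open>Bivariate polynomials in C[x,y] are represented as complex poly poly:
  P = sum_j (coeff P j) * y^j with coeff P j in C[x].  The first variable of the
  paper (s resp. t) is the inner variable x, the second (v resp. u) is the outer y.\<close>

type_synonym bpoly = "complex poly poly"

definition coeff2 :: "bpoly \<Rightarrow> nat \<Rightarrow> nat \<Rightarrow> complex" where
  "coeff2 P i j = coeff (coeff P j) i"

definition const2 :: "complex \<Rightarrow> bpoly" where
  "const2 z = [:[:z:]:]"

definition varX :: bpoly where "varX = [:[:0, 1:]:]"
definition varY :: bpoly where "varY = [:0, 1:]"

definition homog :: "nat \<Rightarrow> bpoly \<Rightarrow> bool" where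
  "homog n P \<longleftrightarrow> (\<forall>i j. coeff2 P i j \<noteq> 0 \<longrightarrow> i + j = n)"

definition subst2 :: "bpoly \<Rightarrow> bpoly \<Rightarrow> bpoly \<Rightarrow> bpoly" where
  "subst2 P L1 L2 = (\<Sum>j\<le>degree P. \<Sum>i\<le>degree (coeff P j).
       const2 (coeff2 P i j) * L1 ^ i * L2 ^ j)"

text \<open>The graded ring isomorphism attached to psi(t:u) = (alpha t + beta u : delta t + gamma u),
  i.e. F(t,u) maps to F(alpha t' + beta u', delta t' + gamma u').\<close>
definition psi_sharp :: "complex \<Rightarrow> complex \<Rightarrow> complex \<Rightarrow> complex \<Rightarrow> bpoly \<Rightarrow> bpoly" where
  "psi_sharp \<alpha> \<beta> \<delta> \<gamma> F =
     subst2 F (const2 \<alpha> * varX + const2 \<beta> * varY) (const2 \<delta> * varX + const2 \<gamma> * varY)"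

definition eval2 :: "bpoly \<Rightarrow> complex \<Rightarrow> complex \<Rightarrow> complex" where
  "eval2 P x y = poly (poly P [:y:]) x"

type_synonym triple = "bpoly \<times> bpoly \<times> bpoly"

definition coprime3 :: "bpoly \<Rightarrow> bpoly \<Rightarrow> bpoly \<Rightarrow> bool" where
  "coprime3 a b c \<longleftrightarrow> (\<forall>g. g dvd a \<and> g dvd b \<and> g dvd c \<longrightarrow> is_unit g)"

text \<open>Projective equality of nonzero vectors in C^2 resp. C^3.\<close>
definition prop2 :: "complex \<times> complex \<Rightarrow> complex \<times> complex \<Rightarrow> bool" where
  "prop2 x y \<longleftrightarrow> fst x * snd y = snd x * fst y"

definition prop3 :: "complex \<times> complex \<times> complex \<Rightarrow> complex \<times> complex \<times> complex \<Rightarrow> bool" where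
  "prop3 x y \<longleftrightarrow> (case x of (x1,x2,x3) \<Rightarrow> case y of (y1,y2,y3) \<Rightarrow>
       x1 * y2 = x2 * y1 \<and> x1 * y3 = x3 * y1 \<and> x2 * y3 = x3 * y2)"

definition param_map :: "triple \<Rightarrow> complex \<times> complex \<Rightarrow> complex \<times> complex \<times> complex" where
  "param_map \<phi> x = (case \<phi> of (a,b,c) \<Rightarrow>
      (eval2 a (fst x) (snd x), eval2 b (fst x) (snd x), eval2 c (fst x) (snd x)))"

text \<open>phi : P^1 -> P^2 is birational onto its image (generically injective): outside a
  finite set F of points of P^1, every point is the only preimage of its image.\<close>
definition birational_onto_image :: "triple \<Rightarrow> bool" where
  "birational_onto_image \<phi> \<longleftrightarrow>
     (\<exists>F :: (complex \<times> complex) set. finite F \<and>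
        (\<forall>x y. x \<noteq> (0,0) \<longrightarrow> y \<noteq> (0,0) \<longrightarrow> (\<forall>f\<in>F. \<not> prop2 x f) \<longrightarrow>
               prop3 (param_map \<phi> x) (param_map \<phi> y) \<longrightarrow> prop2 x y))"

definition is_syz :: "triple \<Rightarrow> triple \<Rightarrow> bool" where
  "is_syz \<phi> h \<longleftrightarrow> (case \<phi> of (a,b,c) \<Rightarrow> case h of (h1,h2,h3) \<Rightarrow> h1 * a + h2 * b + h3 * c = 0)"

definition lincomb :: "bpoly \<Rightarrow> triple \<Rightarrow> bpoly \<Rightarrow> triple \<Rightarrow> triple" where
  "lincomb r p w q = (case p of (p1,p2,p3) \<Rightarrow> case q of (q1,q2,q3) \<Rightarrow>
      (r * p1 + w * q1, r * p2 + w * q2, r * p3 + w * q3))"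

definition homog3 :: "nat \<Rightarrow> triple \<Rightarrow> bool" where
  "homog3 d h \<longleftrightarrow> (case h of (h1,h2,h3) \<Rightarrow> homog d h1 \<and> homog d h2 \<and> homog d h3)"

definition mu_basis :: "nat \<Rightarrow> triple \<Rightarrow> nat \<Rightarrow> triple \<Rightarrow> triple \<Rightarrow> bool" where
  "mu_basis n \<phi> \<mu> p q \<longleftrightarrow> \<mu> \<le> n - \<mu> \<and> homog3 \<mu> p \<and> homog3 (n - \<mu>) q \<and>
     is_syz \<phi> p \<and> is_syz \<phi> q \<and>
     (\<forall>h. is_syz \<phi> h \<longrightarrow> (\<exists>!rw. h = lincomb (fst rw) p (snd rw) q))"

text \<open>Coefficient of s^k v^(m-k) in p_phi(s,v;t,u) = sum_i p_i(s,v) phi_i(t,u), where p is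
  homogeneous of degree m in (s,v); it is an element of C[t,u].\<close>
definition pphi_coeff :: "nat \<Rightarrow> triple \<Rightarrow> triple \<Rightarrow> nat \<Rightarrow> bpoly" where
  "pphi_coeff m p \<phi> k = (case p of (p1,p2,p3) \<Rightarrow> case \<phi> of (a,b,c) \<Rightarrow>
      const2 (coeff2 p1 k (m - k)) * a + const2 (coeff2 p2 k (m - k)) * b
        + const2 (coeff2 p3 k (m - k)) * c)"

text \<open>Sylvester matrix of two binary forms f (degree m, coefficient of s^k v^(m-k) is f k)
  and g (degree l) with respect to (s,v): an (m+l) x (m+l) matrix; row i < l holds
  s^i v^(l-1-i) f, row l+i (i < m) holds s^i v^(m-1-i) g, in the monomial basis
  s^j v^(m+l-1-j), j < m+l.\<close>
definition sylv_forms :: "nat \<Rightarrow> (nat \<Rightarrow> 'a::zero) \<Rightarrow> nat \<Rightarrow> (nat \<Rightarrow> 'a) \<Rightarrow> 'a mat" where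
  "sylv_forms m f l g = mat (m + l) (m + l) (\<lambda>(i, j).
      if i < l then (if i \<le> j \<and> j - i \<le> m then f (j - i) else 0)
      else (if i - l \<le> j \<and> j - (i - l) \<le> l then g (j - (i - l)) else 0))"

definition minors :: "nat \<Rightarrow> 'a::comm_ring_1 mat \<Rightarrow> 'a set" where
  "minors k A = {det (submatrix A I J) | I J.
      I \<subseteq> {..<dim_row A} \<and> J \<subseteq> {..<dim_col A} \<and> card I = k \<and> card J = k}"

definition is_gcd_of :: "'a::comm_semiring_1 \<Rightarrow> 'a set \<Rightarrow> bool" where
  "is_gcd_of G S \<longleftrightarrow> (\<forall>x\<in>S. G dvd x) \<and> (\<forall>g. (\<forall>x\<in>S. g dvd x) \<longrightarrow> g dvd G)"

definition singular_factors :: "nat \<Rightarrow> triple \<Rightarrow> (nat \<Rightarrow> bpoly) \<Rightarrow> bool" where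
  "singular_factors n \<phi> d \<longleftrightarrow>
     (\<exists>\<mu> p q. mu_basis n \<phi> \<mu> p q \<and>
        (\<forall>i\<in>{1..n}. \<exists>k. homog k (d i)) \<and>
        (\<forall>i\<in>{1..n}. is_gcd_of (\<Prod>j\<in>{i..n}. d j ^ (j - i + 1))
           (minors (n + 1 - i)
              (sylv_forms \<mu> (pphi_coeff \<mu> p \<phi>) (n - \<mu>) (pphi_coeff (n - \<mu>) q \<phi>)))))"

end

theory Submission
  imports Defs
begin


lemma eval2_add[simp]: "eval2 (P + Q) x y = eval2 P x y + eval2 Q x y"
  by (simp add: eval2_def)
lemma eval2_mult[simp]: "eval2 (P * Q) x y = eval2 P x y * eval2 Q x y"
  by (simp add: eval2_def)
lemma eval2_diff[simp]: "eval2 (P - Q) x y = eval2 P x y - eval2 Q x y"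
  by (simp add: eval2_def)
lemma eval2_0[simp]: "eval2 0 x y = 0" by (simp add: eval2_def)
lemma eval2_1[simp]: "eval2 1 x y = 1" by (simp add: eval2_def)
lemma eval2_sum[simp]: "eval2 (sum f A) x y = (\<Sum>a\<in>A. eval2 (f a) x y)"
  by (induct A rule: infinite_finite_induct) auto
lemma eval2_power[simp]: "eval2 (P ^ k) x y = eval2 P x y ^ k"
  by (induct k) auto
lemma eval2_const2[simp]: "eval2 (const2 c) x y = c"
  by (simp add: eval2_def const2_def)
lemma eval2_varX[simp]: "eval2 varX x y = x"
  by (simp add: eval2_def varX_def)
lemma eval2_varY[simp]: "eval2 varY x y = y"
  by (simp add: eval2_def varY_def)

lemma eval2_subst2: "eval2 (subst2 P L1 L2) x y =
  (\<Sum>j\<le>degree P. \<Sum>i\<le>degree (coeff P j). coeff2 P i j * eval2 L1 x y ^ i * eval2 L2 x y ^ j)"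
  by (simp add: subst2_def)

lemma eval2_expand: "eval2 P x y =
  (\<Sum>j\<le>degree P. \<Sum>i\<le>degree (coeff P j). coeff2 P i j * x ^ i * y ^ j)"
proof -
  have "poly P [:y:] = (\<Sum>j\<le>degree P. smult (y ^ j) (coeff P j))"
    unfolding poly_altdef
    by (rule sum.cong) (auto simp: poly_const_pow mult.commute)
  hence "eval2 P x y = (\<Sum>j\<le>degree P. y ^ j * poly (coeff P j) x)"
    by (simp add: eval2_def poly_sum)
  also have "\<dots> = (\<Sum>j\<le>degree P. \<Sum>i\<le>degree (coeff P j). coeff2 P i j * x ^ i * y ^ j)"
    by (rule sum.cong, simp, simp add: poly_altdef sum_distrib_left coeff2_def mult_ac)
  finally show ?thesis .
qed

lemma degree_map_poly_le0: "f 0 = 0 \<Longrightarrow> degree (map_poly f p) \<le> degree p"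
  by (rule degree_le) (auto simp: coeff_map_poly coeff_eq_0)

lemma eval2_zero_imp: assumes "\<And>x y. eval2 P x y = 0" shows "P = 0"
proof -
  have 1: "poly P [:y:] = 0" for y
    using assms by (simp add: eval2_def poly_all_0_iff_0[symmetric])
  have 2: "poly (map_poly (\<lambda>q. coeff q i) P) y = coeff (poly P [:y:]) i" for i y
  proof -
    have "poly P [:y:] = (\<Sum>j\<le>degree P. smult (y ^ j) (coeff P j))"
      unfolding poly_altdef
      by (rule sum.cong) (auto simp: poly_const_pow mult.commute)
    hence "coeff (poly P [:y:]) i = (\<Sum>j\<le>degree P. y ^ j * coeff (coeff P j) i)"
      by (simp add: coeff_sum)
    also have "\<dots> = poly (map_poly (\<lambda>q. coeff q i) P) y"
      unfolding poly_altdef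
      by (rule sum.mono_neutral_cong_right) (auto simp: coeff_map_poly degree_map_poly_le0 mult.commute intro!: le_degree)
    finally show ?thesis by simp
  qed
  have "map_poly (\<lambda>q. coeff q i) P = 0" for i
    using 2 1 by (simp add: poly_all_0_iff_0[symmetric])
  hence "coeff (coeff P j) i = 0" for i j
    by (metis coeff_0 coeff_map_poly)
  thus ?thesis by (metis leading_coeff_0_iff poly_eqI coeff_0)
qed

lemma eval2_inj: assumes "\<And>x y. eval2 P x y = eval2 Q x y" shows "P = Q"
  using eval2_zero_imp[of "P - Q"] assms by simp

abbreviation ps where "ps \<equiv> psi_sharp"

lemma eval2_ps: "eval2 (ps a b d g P) x y = eval2 P (a*x+b*y) (d*x+g*y)"
  by (simp add: psi_sharp_def eval2_subst2 eval2_expand[of P])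

lemma ps_add: "ps a b d g (P + Q) = ps a b d g P + ps a b d g Q"
  by (rule eval2_inj) (simp add: eval2_ps)
lemma ps_mult: "ps a b d g (P * Q) = ps a b d g P * ps a b d g Q"
  by (rule eval2_inj) (simp add: eval2_ps)
lemma ps_one: "ps a b d g 1 = 1"
  by (rule eval2_inj) (simp add: eval2_ps)
lemma ps_zero: "ps a b d g 0 = 0"
  by (rule eval2_inj) (simp only: eval2_ps eval2_0)
lemma ps_const2[simp]: "ps a b d g (const2 c) = const2 c"
  by (rule eval2_inj) (simp add: eval2_ps)
lemma ps_varX: "ps a b d g varX = const2 a * varX + const2 b * varY"
  by (rule eval2_inj) (simp add: eval2_ps)
lemma ps_varY: "ps a b d g varY = const2 d * varX + const2 g * varY"
  by (rule eval2_inj) (simp add: eval2_ps)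

interpretation ps_hom: comm_ring_hom "ps a b d g"
  by unfold_locales (auto simp: ps_add ps_mult ps_one ps_zero)

lemma inv_lem1: "D = a*g-b*d \<Longrightarrow> D * u = 1 \<Longrightarrow> a * (g * u * x + - b * u * y) + b * (- d * u * x + a * u * y) = (x::complex)"
proof -
  assume h: "D = a*g-b*d" "D * u = 1"
  have "a * (g * u * x + - b * u * y) + b * (- d * u * x + a * u * y) = x * (D * u)"
    unfolding h(1) by (simp add: algebra_simps)
  thus ?thesis using h(2) by simp
qed
lemma inv_lem2: "D = a*g-b*d \<Longrightarrow> D * u = 1 \<Longrightarrow> d * (g * u * x + - b * u * y) + g * (- d * u * x + a * u * y) = (y::complex)"
proof -
  assume h: "D = a*g-b*d" "D * u = 1"
  have "d * (g * u * x + - b * u * y) + g * (- d * u * x + a * u * y) = y * (D * u)"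
    unfolding h(1) by (simp add: algebra_simps)
  thus ?thesis using h(2) by simp
qed
lemma inv_lem3: "D = a*g-b*d \<Longrightarrow> D * u = 1 \<Longrightarrow> g * u * (a * x + b * y) + - b * u * (d * x + g * y) = (x::complex)"
proof -
  assume h: "D = a*g-b*d" "D * u = 1"
  have "g * u * (a * x + b * y) + - b * u * (d * x + g * y) = x * (D * u)"
    unfolding h(1) by (simp add: algebra_simps)
  thus ?thesis using h(2) by simp
qed
lemma inv_lem4: "D = a*g-b*d \<Longrightarrow> D * u = 1 \<Longrightarrow> - d * u * (a * x + b * y) + a * u * (d * x + g * y) = (y::complex)"
proof -
  assume h: "D = a*g-b*d" "D * u = 1"
  have "- d * u * (a * x + b * y) + a * u * (d * x + g * y) = y * (D * u)"
    unfolding h(1) by (simp add: algebra_simps)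
  thus ?thesis using h(2) by simp
qed

lemma ps_inv:
  assumes "a * g - b * d \<noteq> 0"
  shows "ps (g/(a*g-b*d)) (-b/(a*g-b*d)) (-d/(a*g-b*d)) (a/(a*g-b*d)) (ps a b d g P) = P"
    "ps a b d g (ps (g/(a*g-b*d)) (-b/(a*g-b*d)) (-d/(a*g-b*d)) (a/(a*g-b*d)) P) = P"
proof -
  let ?D = "a*g-b*d"
  have e1: "a * (g / ?D * x + - b / ?D * y) + b * (- d / ?D * x + a / ?D * y) = x"
   and e2: "d * (g / ?D * x + - b / ?D * y) + g * (- d / ?D * x + a / ?D * y) = y"
   and e3: "g / ?D * (a * x + b * y) + - b / ?D * (d * x + g * y) = x"
   and e4: "- d / ?D * (a * x + b * y) + a / ?D * (d * x + g * y) = y" for x y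
  proof -
    define u where "u = 1/?D"
    have hu: "?D * u = 1" using assms by (simp add: u_def)
    have q: "\<And>z. z / ?D = z * u" by (simp add: u_def)
    show "a * (g / ?D * x + - b / ?D * y) + b * (- d / ?D * x + a / ?D * y) = x"
      "d * (g / ?D * x + - b / ?D * y) + g * (- d / ?D * x + a / ?D * y) = y"
      "g / ?D * (a * x + b * y) + - b / ?D * (d * x + g * y) = x"
      "- d / ?D * (a * x + b * y) + a / ?D * (d * x + g * y) = y"
      unfolding q
      by (rule inv_lem1[OF refl hu], rule inv_lem2[OF refl hu], rule inv_lem3[OF refl hu], rule inv_lem4[OF refl hu])
  qed
  show "ps (g/(a*g-b*d)) (-b/(a*g-b*d)) (-d/(a*g-b*d)) (a/(a*g-b*d)) (ps a b d g P) = P"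
    by (rule eval2_inj) (simp only: eval2_ps e1 e2)
  show "ps a b d g (ps (g/(a*g-b*d)) (-b/(a*g-b*d)) (-d/(a*g-b*d)) (a/(a*g-b*d)) P) = P"
    by (rule eval2_inj) (simp only: eval2_ps e3 e4)
qed


definition cv :: "nat \<Rightarrow> bpoly \<Rightarrow> nat \<Rightarrow> complex" where
  "cv m P k = coeff2 P k (m - k)"

definition E :: "nat \<Rightarrow> nat \<Rightarrow> bpoly" where
  "E m k = monom (monom 1 k) (m - k)"

lemma bpoly_eqI: "(\<And>i j. coeff2 P i j = coeff2 Q i j) \<Longrightarrow> P = Q"
  unfolding coeff2_def by (intro poly_eqI) auto

lemma coeff2_add[simp]: "coeff2 (P + Q) i j = coeff2 P i j + coeff2 Q i j"
  by (simp add: coeff2_def)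
lemma coeff2_0[simp]: "coeff2 0 i j = 0"
  by (simp add: coeff2_def)
lemma coeff2_sum[simp]: "coeff2 (sum f A) i j = (\<Sum>a\<in>A. coeff2 (f a) i j)"
  by (induct A rule: infinite_finite_induct) auto
lemma coeff2_monom[simp]: "coeff2 (monom (monom c k) l) i j = (if i = k \<and> j = l then c else 0)"
  by (simp add: coeff2_def)
lemma coeff2_const2_mult[simp]: "coeff2 (const2 c * P) i j = c * coeff2 P i j"
  by (simp add: coeff2_def const2_def)

lemma const2_mult_monom: "const2 c * monom (monom c' k) l = monom (monom (c*c') k) l"
  by (rule bpoly_eqI) simp

lemma monom_mult2: "monom (monom c k) l * monom (monom c' k') l' = monom (monom (c*c') (k+k')) (l+l')"
  by (simp add: mult_monom)

lemma const2_add: "const2 (x + y) = const2 x + const2 y" by (simp add: const2_def)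
lemma const2_mult: "const2 (x * y) = const2 x * const2 y" by (simp add: const2_def)
lemma const2_1: "const2 1 = 1" by (simp add: const2_def one_pCons)
lemma const2_0: "const2 0 = 0" by (simp add: const2_def)

lemma homog_0[simp]: "homog m 0" by (simp add: homog_def)
lemma homog_add: "homog m P \<Longrightarrow> homog m Q \<Longrightarrow> homog m (P + Q)"
  unfolding homog_def by (metis add.left_neutral coeff2_add)
lemma homog_sum: "(\<And>a. a \<in> A \<Longrightarrow> homog m (f a)) \<Longrightarrow> homog m (sum f A)"
  by (induct A rule: infinite_finite_induct) (auto intro: homog_add)
lemma homog_monom: "k + l = m \<Longrightarrow> homog m (monom (monom c k) l)"
  by (simp add: homog_def)
lemma homog_const2_mult: "homog m P \<Longrightarrow> homog m (const2 c * P)"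
  by (simp add: homog_def)

lemma homog_decomp:
  assumes "homog m P"
  shows "P = (\<Sum>k\<le>m. monom (monom (cv m P k) k) (m - k))"
proof (rule bpoly_eqI)
  fix i j
  have "(\<Sum>k\<le>m. coeff2 (monom (monom (cv m P k) k) (m - k)) i j)
      = (\<Sum>k\<le>m. if k = i then (if j = m - i then cv m P i else 0) else 0)"
    by (rule sum.cong) auto
  also have "\<dots> = (if i \<le> m \<and> j = m - i then cv m P i else 0)"
    by (simp add: sum.delta)
  also have "\<dots> = coeff2 P i j"
    using assms unfolding homog_def cv_def
    by (metis add_diff_cancel_left' le_add1)
  finally show "coeff2 P i j = coeff2 (\<Sum>k\<le>m. monom (monom (cv m P k) k) (m - k)) i j"
    by simp
qed

lemma homog_mult:
  assumes "homog a P" "homog b Q"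
  shows "homog (a + b) (P * Q)"
proof -
  have "P * Q = (\<Sum>k\<le>a. monom (monom (cv a P k) k) (a - k)) * (\<Sum>k\<le>b. monom (monom (cv b Q k) k) (b - k))"
    using homog_decomp[OF assms(1)] homog_decomp[OF assms(2)] by simp
  also have "\<dots> = (\<Sum>k\<le>a. \<Sum>k'\<le>b. monom (monom (cv a P k * cv b Q k') (k + k')) (a - k + (b - k')))"
    by (simp add: sum_product monom_mult2)
  finally show ?thesis
    by (auto intro!: homog_sum homog_monom)
qed

lemma homog_1: "homog 0 1"
  using homog_monom[of 0 0 0 1] by (simp add: one_pCons monom_0)

lemma homog_power: "homog a P \<Longrightarrow> homog (a * k) (P ^ k)"
  by (induct k) (auto simp: homog_1 intro: homog_mult[of a P "a*k" for k, simplified add.commute] dest: homog_mult)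

lemma varX_monom: "varX = monom (monom 1 1) 0"
  by (simp add: varX_def monom_0 monom_Suc)
lemma varY_monom: "varY = monom (monom 1 0) 1"
  by (simp add: varY_def monom_0 monom_Suc one_pCons)
lemma monom_split: "monom (monom c k) l = const2 c * varX ^ k * varY ^ l"
proof -
  have "varX ^ k = monom (monom 1 k) 0"
    by (induct k) (auto simp: varX_monom monom_mult2 one_pCons monom_0 mult_monom)
  moreover have "varY ^ l = monom (monom 1 0) l"
    by (induct l) (auto simp: varY_monom monom_mult2 one_pCons monom_0 mult_monom)
  ultimately show ?thesis by (simp only: monom_mult2 const2_mult_monom) simp
qed

lemma ps_monom: "ps a b d g (monom (monom c k) l) =
   const2 c * (const2 a * varX + const2 b * varY) ^ k * (const2 d * varX + const2 g * varY) ^ l"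
  by (simp add: monom_split ps_hom.hom_mult ps_hom.hom_power ps_varX ps_varY)

lemma homog_L: "homog 1 (const2 a * varX + const2 b * varY)"
  unfolding varX_monom varY_monom const2_mult_monom
  by (rule homog_add; rule homog_monom; simp)

lemma homog_ps_monom: "homog (k + l) (ps a b d g (monom (monom c k) l))"
  unfolding ps_monom
  using homog_mult[OF homog_mult[OF homog_const2_mult[OF homog_1] homog_power[OF homog_L]] homog_power[OF homog_L]]
  by (simp add: const2_1)

lemma homog_ps: assumes "homog m P" shows "homog m (ps a b d g P)"
proof -
  have "ps a b d g P = (\<Sum>k\<le>m. ps a b d g (monom (monom (cv m P k) k) (m - k)))"
    by (subst homog_decomp[OF assms]) (simp add: ps_hom.hom_sum)
  also have "homog m \<dots>"
    by (rule homog_sum) (metis atMost_iff homog_ps_monom le_add_diff_inverse)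
  finally show ?thesis .
qed

lemma homog_E: "k \<le> m \<Longrightarrow> homog m (E m k)"
  unfolding E_def by (rule homog_monom) simp

lemma monom_E: "monom (monom c k) (m - k) = const2 c * E m k"
  by (simp add: E_def const2_mult_monom)

lemma cv_add[simp]: "cv m (P + Q) k = cv m P k + cv m Q k" by (simp add: cv_def)
lemma cv_sum[simp]: "cv m (sum f A) k = (\<Sum>a\<in>A. cv m (f a) k)" by (simp add: cv_def)
lemma cv_const2_mult[simp]: "cv m (const2 c * P) k = c * cv m P k" by (simp add: cv_def)

lemma homog_decomp_E:
  assumes "homog m P"
  shows "P = (\<Sum>k\<le>m. const2 (cv m P k) * E m k)"
  using homog_decomp[OF assms] by (simp add: monom_E)

lemma cv_ps:
  assumes "homog m P"
  shows "cv m (ps a b d g P) j = (\<Sum>k\<le>m. cv m P k * cv m (ps a b d g (E m k)) j)"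
proof -
  have "ps a b d g P = (\<Sum>k\<le>m. const2 (cv m P k) * ps a b d g (E m k))"
    by (subst homog_decomp_E[OF assms]) (simp add: ps_hom.hom_sum ps_hom.hom_mult)
  thus ?thesis by simp
qed

lemma coeff2_E_mult:
  "coeff2 (monom (monom 1 r) s * P) i j = (if r \<le> i \<and> s \<le> j then coeff2 P (i - r) (j - s) else 0)"
  by (simp add: coeff2_def coeff_monom_mult)

lemma cv_shift:
  assumes "homog m P" "r \<le> N" "j \<le> N + m"
  shows "cv (N + m) (E N r * P) j = (if r \<le> j \<and> j - r \<le> m then cv m P (j - r) else 0)"
  using assms(2,3)
  by (auto simp: cv_def E_def coeff2_E_mult intro!: arg_cong[where f="coeff2 P (j - r)"])


interpretation c2: comm_ring_hom const2
  by unfold_locales (auto simp: const2_add const2_mult const2_1 const2_0)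

lemma sylv_row1:
  assumes "homog m P" "r < l" "j < m + l"
  shows "sylv_forms m f l g $$ (r, j) = (if r \<le> j \<and> j - r \<le> m then f (j - r) else 0)"
  using assms by (simp add: sylv_forms_def)

lemma sylv_row2:
  assumes "l \<le> r" "r < m + l" "j < m + l"
  shows "sylv_forms m f l g $$ (r, j) = (if r - l \<le> j \<and> j - (r - l) \<le> l then g (j - (r - l)) else 0)"
  using assms by (simp add: sylv_forms_def)

lemma sylv_cv1:
  assumes "homog m P" "r < l" "j < m + l"
  shows "sylv_forms m (cv m P) l g $$ (r, j) = cv (m + l - 1) (E (l - 1) r * P) j"
proof -
  have "cv (l - 1 + m) (E (l - 1) r * P) j = (if r \<le> j \<and> j - r \<le> m then cv m P (j - r) else 0)"
    by (rule cv_shift) (use assms in auto)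
  moreover have "l - 1 + m = m + l - 1" using assms by simp
  ultimately show ?thesis using assms by (simp add: sylv_forms_def)
qed

lemma sylv_cv2:
  assumes "homog l Q" "l \<le> r" "r < m + l" "j < m + l"
  shows "sylv_forms m f l (cv l Q) $$ (r, j) = cv (m + l - 1) (E (m - 1) (r - l) * Q) j"
proof -
  have "cv (m - 1 + l) (E (m - 1) (r - l) * Q) j = (if r - l \<le> j \<and> j - (r - l) \<le> l then cv l Q (j - (r - l)) else 0)"
    by (rule cv_shift) (use assms in auto)
  moreover have "m - 1 + l = m + l - 1" using assms by simp
  ultimately show ?thesis using assms by (simp add: sylv_forms_def)
qed

lemma E_expand:
  assumes inv: "\<And>P. ps a b d g (ps a' b' d' g' P) = P" and "r \<le> k"
  shows "E k r = (\<Sum>r'\<le>k. const2 (cv k (ps a' b' d' g' (E k r)) r') * ps a b d g (E k r'))"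
proof -
  have h: "homog k (ps a' b' d' g' (E k r))" using assms(2) by (intro homog_ps homog_E)
  have "E k r = ps a b d g (ps a' b' d' g' (E k r))" using inv by simp
  also have "\<dots> = ps a b d g (\<Sum>r'\<le>k. const2 (cv k (ps a' b' d' g' (E k r)) r') * E k r')"
    by (subst homog_decomp_E[OF h]) simp
  also have "\<dots> = (\<Sum>r'\<le>k. const2 (cv k (ps a' b' d' g' (E k r)) r') * ps a b d g (E k r'))"
    by (simp add: ps_hom.hom_sum ps_hom.hom_mult)
  finally show ?thesis .
qed

lemma G_lemma:
  assumes inv: "\<And>P. ps a b d g (ps a' b' d' g' P) = P" and P: "homog m P" and r: "r \<le> k"
  shows "cv (k + m) (E k r * ps a b d g P) j =
    (\<Sum>r'\<le>k. \<Sum>j'\<le>k + m. cv k (ps a' b' d' g' (E k r)) r' * cv (k + m) (E k r' * P) j'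
        * cv (k + m) (ps a b d g (E (k + m) j')) j)"
proof -
  have "E k r * ps a b d g P = (\<Sum>r'\<le>k. const2 (cv k (ps a' b' d' g' (E k r)) r') * ps a b d g (E k r' * P))"
    by (subst E_expand[OF inv r]) (simp add: sum_distrib_right ps_hom.hom_mult mult.assoc)
  hence "cv (k + m) (E k r * ps a b d g P) j =
     (\<Sum>r'\<le>k. cv k (ps a' b' d' g' (E k r)) r' * cv (k + m) (ps a b d g (E k r' * P)) j)"
    by simp
  also have "\<dots> = (\<Sum>r'\<le>k. cv k (ps a' b' d' g' (E k r)) r' *
      (\<Sum>j'\<le>k + m. cv (k + m) (E k r' * P) j' * cv (k + m) (ps a b d g (E (k + m) j')) j))"
  proof (rule sum.cong[OF refl])
    fix r' assume "r' \<in> {..k}"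
    hence "homog (k + m) (E k r' * P)" using P by (intro homog_mult homog_E) auto
    thus "cv k (ps a' b' d' g' (E k r)) r' * cv (k + m) (ps a b d g (E k r' * P)) j =
      cv k (ps a' b' d' g' (E k r)) r' *
      (\<Sum>j'\<le>k + m. cv (k + m) (E k r' * P) j' * cv (k + m) (ps a b d g (E (k + m) j')) j)"
      by (simp add: cv_ps)
  qed
  finally show ?thesis by (simp add: sum_distrib_left mult.assoc)
qed


lemma sum_split_nat: "(\<Sum>i<(l::nat)+m. f i) = (\<Sum>i<l. f i) + (\<Sum>i<m. f (l+i))"
  by (induct m) (auto simp: add_ac)

definition Acoef :: "complex \<Rightarrow> complex \<Rightarrow> complex \<Rightarrow> complex \<Rightarrow> nat \<Rightarrow> nat \<Rightarrow> nat \<Rightarrow> nat \<Rightarrow> complex" where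
  "Acoef a' b' d' g' m l r r' = (if r < l then (if r' < l then cv (l-1) (ps a' b' d' g' (E (l-1) r)) r' else 0)
     else (if l \<le> r' then cv (m-1) (ps a' b' d' g' (E (m-1) (r-l))) (r'-l) else 0))"

definition Bcoef :: "complex \<Rightarrow> complex \<Rightarrow> complex \<Rightarrow> complex \<Rightarrow> nat \<Rightarrow> nat \<Rightarrow> nat \<Rightarrow> complex" where
  "Bcoef a b d g N j' j = cv (N-1) (ps a b d g (E (N-1) j')) j"

lemma K_lemma:
  assumes inv: "\<And>P. ps a b d g (ps a' b' d' g' P) = P" and P: "homog m P" and Q: "homog l Q"
    and r: "r < m + l" and j: "j < m + l"
  shows "sylv_forms m (cv m (ps a b d g P)) l (cv l (ps a b d g Q)) $$ (r, j) =
    (\<Sum>r'<m+l. \<Sum>j'<m+l. Acoef a' b' d' g' m l r r' * sylv_forms m (cv m P) l (cv l Q) $$ (r', j')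
       * Bcoef a b d g (m+l) j' j)"
proof (cases "r < l")
  case True
  then obtain k where l: "l = Suc k" by (cases l) auto
  have ml: "m + l - 1 = k + m" "m + l = l + m" using l by auto
  have "sylv_forms m (cv m (ps a b d g P)) l (cv l (ps a b d g Q)) $$ (r, j)
      = cv (k + m) (E k r * ps a b d g P) j"
    using sylv_cv1[OF homog_ps[OF P] True j] l by (simp add: add.commute)
  also have "\<dots> = (\<Sum>r'\<le>k. \<Sum>j'\<le>k + m. cv k (ps a' b' d' g' (E k r)) r' * cv (k + m) (E k r' * P) j'
        * cv (k + m) (ps a b d g (E (k + m) j')) j)"
    by (rule G_lemma[OF inv P]) (use True l in auto)
  also have "\<dots> = (\<Sum>r'<l. \<Sum>j'<m+l. Acoef a' b' d' g' m l r r' * sylv_forms m (cv m P) l (cv l Q) $$ (r', j')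
       * Bcoef a b d g (m+l) j' j)"
  proof -
    have s1: "{..<l} = {..k}" "{..<m+l} = {..k+m}" using l by auto
    show ?thesis unfolding s1
    proof (intro sum.cong refl)
      fix r' j' assume "r' \<in> {..k}" "j' \<in> {..k+m}"
      hence "r' < l" "j' < m + l" using l by auto
      thus "cv k (ps a' b' d' g' (E k r)) r' * cv (k + m) (E k r' * P) j' * cv (k + m) (ps a b d g (E (k + m) j')) j =
         Acoef a' b' d' g' m l r r' * sylv_forms m (cv m P) l (cv l Q) $$ (r', j') * Bcoef a b d g (m + l) j' j"
        using sylv_cv1[OF P, of r' l j'] True l by (simp add: Acoef_def Bcoef_def ml add.commute)
    qed
  qed
  also have "\<dots> = (\<Sum>r'<m+l. \<Sum>j'<m+l. Acoef a' b' d' g' m l r r' * sylv_forms m (cv m P) l (cv l Q) $$ (r', j')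
       * Bcoef a b d g (m+l) j' j)"
  proof -
    define F where "F r' = (\<Sum>j'<m+l. Acoef a' b' d' g' m l r r' * sylv_forms m (cv m P) l (cv l Q) $$ (r', j')
       * Bcoef a b d g (m+l) j' j)" for r'
    have "(\<Sum>r'<m+l. F r') = (\<Sum>r'<l. F r') + (\<Sum>i<m. F (l+i))"
      using sum_split_nat[where l=l and m=m and f=F] by (simp only: add.commute)
    moreover have "F (l+i) = 0" for i using True unfolding F_def Acoef_def by simp
    ultimately have "(\<Sum>r'<m+l. F r') = (\<Sum>r'<l. F r')" by simp
    thus ?thesis unfolding F_def by (rule sym)
  qed
  finally show ?thesis .
next
  case False
  define i where "i = r - l"
  have ri: "r = l + i" "i < m" using r False unfolding i_def by auto
  then obtain k where m: "m = Suc k" by (cases m) auto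
  have ml: "m + l - 1 = k + l" "m + l = l + m" using m by auto
  have "sylv_forms m (cv m (ps a b d g P)) l (cv l (ps a b d g Q)) $$ (r, j)
      = cv (k + l) (E k i * ps a b d g Q) j"
    using sylv_cv2[OF homog_ps[OF Q] _ r j] ri m by (simp add: add.commute)
  also have "\<dots> = (\<Sum>r'\<le>k. \<Sum>j'\<le>k + l. cv k (ps a' b' d' g' (E k i)) r' * cv (k + l) (E k r' * Q) j'
        * cv (k + l) (ps a b d g (E (k + l) j')) j)"
    by (rule G_lemma[OF inv Q]) (use ri m in auto)
  also have "\<dots> = (\<Sum>r'<m. \<Sum>j'<m+l. Acoef a' b' d' g' m l r (l + r') * sylv_forms m (cv m P) l (cv l Q) $$ (l + r', j')
       * Bcoef a b d g (m+l) j' j)"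
  proof -
    have s1: "{..<m} = {..k}" "{..<m+l} = {..k+l}" using m by auto
    show ?thesis unfolding s1
    proof (intro sum.cong refl)
      fix r' j' assume "r' \<in> {..k}" "j' \<in> {..k+l}"
      hence "r' < m" "j' < m + l" using m by auto
      thus "cv k (ps a' b' d' g' (E k i)) r' * cv (k + l) (E k r' * Q) j' * cv (k + l) (ps a b d g (E (k + l) j')) j =
         Acoef a' b' d' g' m l r (l + r') * sylv_forms m (cv m P) l (cv l Q) $$ (l + r', j') * Bcoef a b d g (m + l) j' j"
        using sylv_cv2[OF Q, of "l + r'" m j'] False ri m by (simp add: Acoef_def Bcoef_def ml add.commute)
    qed
  qed
  also have "\<dots> = (\<Sum>r'<m+l. \<Sum>j'<m+l. Acoef a' b' d' g' m l r r' * sylv_forms m (cv m P) l (cv l Q) $$ (r', j')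
       * Bcoef a b d g (m+l) j' j)"
  proof -
    define F where "F r' = (\<Sum>j'<m+l. Acoef a' b' d' g' m l r r' * sylv_forms m (cv m P) l (cv l Q) $$ (r', j')
       * Bcoef a b d g (m+l) j' j)" for r'
    have "(\<Sum>r'<m+l. F r') = (\<Sum>r'<l. F r') + (\<Sum>i<m. F (l+i))"
      using sum_split_nat[where l=l and m=m and f=F] by (simp only: add.commute)
    moreover have "F r' = 0" if "r' < l" for r' using False that unfolding F_def Acoef_def by simp
    ultimately have "(\<Sum>r'<m+l. F r') = (\<Sum>i<m. F (l+i))" by simp
    thus ?thesis unfolding F_def by (rule sym)
  qed
  finally show ?thesis .
qed


lemma Lin_lemma:
  assumes "r < m + l" "j < m + l"
  shows "sylv_forms m (pphi_coeff m (p1,p2,p3) (a1,a2,a3)) l (pphi_coeff l (q1,q2,q3) (a1,a2,a3)) $$ (r, j)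
    = const2 (sylv_forms m (cv m p1) l (cv l q1) $$ (r, j)) * a1
    + const2 (sylv_forms m (cv m p2) l (cv l q2) $$ (r, j)) * a2
    + const2 (sylv_forms m (cv m p3) l (cv l q3) $$ (r, j)) * a3"
  using assms by (simp add: sylv_forms_def pphi_coeff_def cv_def const2_0)

lemma sylv_dims[simp]: "dim_row (sylv_forms m f l g) = m + l" "dim_col (sylv_forms m f l g) = m + l"
  by (simp_all add: sylv_forms_def)

lemma aux_c2: "const2 (\<Sum>r'\<in>R. \<Sum>j'\<in>J. A r' * S r' j' * B j') * x =
   (\<Sum>r'\<in>R. \<Sum>j'\<in>J. const2 (A r') * (const2 (S r' j') * x) * const2 (B j'))"
  by (simp add: c2.hom_sum c2.hom_mult sum_distrib_right sum_distrib_left mult_ac)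

definition AR where "AR a' b' d' g' m l = mat (m+l) (m+l) (\<lambda>(r,r'). const2 (Acoef a' b' d' g' m l r r'))"
definition BR where "BR a b d g N = mat N N (\<lambda>(j',j). const2 (Bcoef a b d g N j' j))"

lemma M_lemma:
  assumes inv: "\<And>P. ps a b d g (ps a' b' d' g' P) = P"
    and p: "homog m p1" "homog m p2" "homog m p3"
    and q: "homog l q1" "homog l q2" "homog l q3"
  shows "sylv_forms m (pphi_coeff m (ps a b d g p1, ps a b d g p2, ps a b d g p3)
             (ps a b d g a1, ps a b d g a2, ps a b d g a3))
           l (pphi_coeff l (ps a b d g q1, ps a b d g q2, ps a b d g q3)
             (ps a b d g a1, ps a b d g a2, ps a b d g a3))
    = AR a' b' d' g' m l * map_mat (ps a b d g)
        (sylv_forms m (pphi_coeff m (p1,p2,p3) (a1,a2,a3)) l (pphi_coeff l (q1,q2,q3) (a1,a2,a3)))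
      * BR a b d g (m+l)"
    (is "?L = ?R")
proof (rule eq_matI)
  let ?N = "m + l"
  let ?S = "sylv_forms m (pphi_coeff m (p1,p2,p3) (a1,a2,a3)) l (pphi_coeff l (q1,q2,q3) (a1,a2,a3))"
  let ?A = "Acoef a' b' d' g' m l"
  let ?B = "Bcoef a b d g ?N"
  let ?s = "ps a b d g"
  define S1 where "S1 = sylv_forms m (cv m p1) l (cv l q1)"
  define S2 where "S2 = sylv_forms m (cv m p2) l (cv l q2)"
  define S3 where "S3 = sylv_forms m (cv m p3) l (cv l q3)"
  define X where "X r' j' = const2 (S1 $$ (r', j')) * ?s a1 + const2 (S2 $$ (r', j')) * ?s a2 + const2 (S3 $$ (r', j')) * ?s a3" for r' j'
  show "dim_row ?L = dim_row ?R" "dim_col ?L = dim_col ?R"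
    by (simp_all add: sylv_forms_def AR_def BR_def)
  fix r j assume "r < dim_row ?R" "j < dim_col ?R"
  hence r: "r < ?N" and j: "j < ?N" by (simp_all add: AR_def BR_def)
  have sS: "?s (?S $$ (r', j')) = X r' j'" if "r' < ?N" "j' < ?N" for r' j'
    unfolding Lin_lemma[OF that] X_def S1_def S2_def S3_def by (simp add: ps_hom.hom_add ps_hom.hom_mult)
  have "?L $$ (r, j) = const2 (sylv_forms m (cv m (?s p1)) l (cv l (?s q1)) $$ (r, j)) * ?s a1
    + const2 (sylv_forms m (cv m (?s p2)) l (cv l (?s q2)) $$ (r, j)) * ?s a2
    + const2 (sylv_forms m (cv m (?s p3)) l (cv l (?s q3)) $$ (r, j)) * ?s a3"
    by (rule Lin_lemma[OF r j])
  also have "\<dots> = const2 (\<Sum>r'<?N. \<Sum>j'<?N. ?A r r' * S1 $$ (r', j') * ?B j' j) * ?s a1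
    + const2 (\<Sum>r'<?N. \<Sum>j'<?N. ?A r r' * S2 $$ (r', j') * ?B j' j) * ?s a2
    + const2 (\<Sum>r'<?N. \<Sum>j'<?N. ?A r r' * S3 $$ (r', j') * ?B j' j) * ?s a3"
    unfolding S1_def S2_def S3_def
    by (simp only: K_lemma[OF inv p(1) q(1) r j] K_lemma[OF inv p(2) q(2) r j] K_lemma[OF inv p(3) q(3) r j])
  also have "\<dots> = (\<Sum>r'<?N. \<Sum>j'<?N. const2 (?A r r') * X r' j' * const2 (?B j' j))"
    unfolding aux_c2 X_def by (simp only: distrib_left distrib_right sum.distrib)
  also have "\<dots> = ?R $$ (r, j)"
  proof -
    have "?R $$ (r, j) = (\<Sum>j'<?N. (\<Sum>r'<?N. const2 (?A r r') * ?s (?S $$ (r', j'))) * const2 (?B j' j))"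
      using r j by (simp add: AR_def BR_def scalar_prod_def atLeast0LessThan)
    also have "\<dots> = (\<Sum>j'<?N. (\<Sum>r'<?N. const2 (?A r r') * X r' j') * const2 (?B j' j))"
      by (intro sum.cong refl) (simp add: sS)
    also have "\<dots> = (\<Sum>r'<?N. \<Sum>j'<?N. const2 (?A r r') * X r' j' * const2 (?B j' j))"
      unfolding sum_distrib_right by (rule sum.swap)
    finally show ?thesis by simp
  qed
  finally show "?L $$ (r, j) = ?R $$ (r, j)" .
qed


lemma card_lt_set: "I \<subseteq> {..<(n::nat)} \<Longrightarrow> {i. i < n \<and> i \<in> I} = I" by auto

lemma pick_lt: "I \<subseteq> {..<(n::nat)} \<Longrightarrow> i < card {j. j < n \<and> j \<in> I} \<Longrightarrow> pick I i < n"
  using pick_in_set[of i I] card_lt_set[of I n] by auto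

lemma minor_rows_dvd:
  fixes M' :: "'a::comm_ring_1 mat"
  assumes M': "M' \<in> carrier_mat N k"
    and hyp: "\<And>I'. I' \<subseteq> {..<N} \<Longrightarrow> card I' = k \<Longrightarrow> g dvd det (submatrix M' I' UNIV)"
    and f: "\<And>i. i < k \<Longrightarrow> f i < N"
  shows "g dvd det (mat\<^sub>r k k (\<lambda>i. row M' (f i)))"
proof (cases "inj_on f {0..<k}")
  case False
  then obtain i j where ij: "i \<noteq> j" "i < k" "j < k" "f i = f j"
    unfolding inj_on_def by auto
  have "det (mat\<^sub>r k k (\<lambda>i. row M' (f i))) = 0"
    by (rule det_identical_rows[OF _ ij(1-3)]) (use ij in auto)
  thus ?thesis by simp
next
  case True
  define I' where "I' = f ` {0..<k}"
  have cI: "card I' = k" unfolding I'_def using card_image[OF True] by simp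
  have I'N: "I' \<subseteq> {..<N}" unfolding I'_def using f by auto
  have finI: "finite I'" unfolding I'_def by simp
  define \<pi> where "\<pi> i = (if i < k then card {a\<in>I'. a < f i} else i)" for i
  have fI: "i < k \<Longrightarrow> f i \<in> I'" for i unfolding I'_def by auto
  have pick\<pi>: "i < k \<Longrightarrow> pick I' (\<pi> i) = f i" for i
    unfolding \<pi>_def using pick_card_in_set[OF fI] by simp
  have \<pi>k: "i < k \<Longrightarrow> \<pi> i < k" for i
  proof -
    assume i: "i < k"
    have "{a\<in>I'. a < f i} \<subset> I'" using fI[OF i] by auto
    hence "card {a\<in>I'. a < f i} < card I'" using finI by (rule psubset_card_mono[rotated])
    thus ?thesis using i cI by (simp add: \<pi>_def)
  qed
  have inj\<pi>: "inj_on \<pi> {0..<k}"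
  proof (rule inj_onI)
    fix i j assume "i \<in> {0..<k}" "j \<in> {0..<k}" "\<pi> i = \<pi> j"
    hence "f i = f j" "i \<in> {0..<k}" "j \<in> {0..<k}" using pick\<pi> by (metis atLeastLessThan_iff)+
    thus "i = j" using True unfolding inj_on_def by blast
  qed
  have perm: "\<pi> permutes {0..<k}"
    by (rule inj_on_nat_permutes[OF inj\<pi>]) (use \<pi>k in \<open>auto simp: \<pi>_def\<close>)
  define Sub where "Sub = submatrix M' I' UNIV"
  have dimS: "dim_row Sub = k" "dim_col Sub = k"
    unfolding Sub_def dim_submatrix using M' cI card_lt_set[OF I'N] by auto
  have Sub: "Sub \<in> carrier_mat k k" using dimS by auto
  have eq: "mat\<^sub>r k k (\<lambda>i. row M' (f i)) = mat k k (\<lambda>(i,j). Sub $$ (\<pi> i, j))"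
  proof (rule eq_matI)
    fix i j assume "i < dim_row (mat k k (\<lambda>(i,j). Sub $$ (\<pi> i, j)))" "j < dim_col (mat k k (\<lambda>(i,j). Sub $$ (\<pi> i, j)))"
    hence ij: "i < k" "j < k" by auto
    have "Sub $$ (\<pi> i, j) = M' $$ (pick I' (\<pi> i), pick UNIV j)"
      unfolding Sub_def by (rule submatrix_index) (use dimS ij \<pi>k in \<open>auto simp: Sub_def dim_submatrix\<close>)
    thus "mat\<^sub>r k k (\<lambda>i. row M' (f i)) $$ (i, j) = mat k k (\<lambda>(i,j). Sub $$ (\<pi> i, j)) $$ (i, j)"
      using ij M' f[OF ij(1)] by (simp add: pick\<pi> pick_UNIV)
  qed auto
  have "det (mat\<^sub>r k k (\<lambda>i. row M' (f i))) = signof \<pi> * det Sub"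
    unfolding eq by (rule det_permute_rows[OF Sub perm])
  moreover have "g dvd det Sub" unfolding Sub_def by (rule hyp[OF I'N cI])
  ultimately show ?thesis by simp
qed

lemma minors_mult_left:
  fixes A M :: "'a::comm_ring_1 mat"
  assumes A: "A \<in> carrier_mat r N" and M: "M \<in> carrier_mat N c"
    and hyp: "\<And>y. y \<in> minors k M \<Longrightarrow> g dvd y"
    and x: "x \<in> minors k (A * M)"
  shows "g dvd x"
proof -
  from x[unfolded minors_def] obtain I J where xIJ: "x = det (submatrix (A * M) I J)" and I0: "I \<subseteq> {..<dim_row (A * M)}"
    and J0: "J \<subseteq> {..<dim_col (A * M)}" and cI: "card I = k" and cJ: "card J = k"
    by blast
  have I: "I \<subseteq> {..<r}" using I0 A by simp
  have J: "J \<subseteq> {..<c}" using J0 M by simp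
  have eI: "{i. i < dim_row A \<and> i \<in> I} = I" using I A by auto
  have eN: "{j. j < dim_col A \<and> j \<in> (UNIV::nat set)} = {..<N}" using A by auto
  have eJ: "{i. i < dim_col M \<and> i \<in> J} = J" using J M by auto
  have eN2: "{j. j < dim_row M \<and> j \<in> (UNIV::nat set)} = {..<N}" using M by auto
  have eI2: "{i. i < dim_row (A * M) \<and> i \<in> I} = I" using I A by auto
  have eJ2: "{i. i < dim_col (A * M) \<and> i \<in> J} = J" using J M by auto
  define A' where "A' = submatrix A I UNIV"
  define M' where "M' = submatrix M UNIV J"
  have dA': "dim_row A' = k" "dim_col A' = N" unfolding A'_def dim_submatrix eI eN using cI by simp_all
  have dM': "dim_row M' = N" "dim_col M' = k" unfolding M'_def dim_submatrix eJ eN2 using cJ by simp_all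
  have A': "A' \<in> carrier_mat k N" by (rule carrier_matI[OF dA'(1) dA'(2)])
  have M': "M' \<in> carrier_mat N k" by (rule carrier_matI[OF dM'(1) dM'(2)])
  have dS: "dim_row (submatrix (A * M) I J) = k" "dim_col (submatrix (A * M) I J) = k"
    unfolding dim_submatrix eI2 eJ2 using cI cJ by simp_all
  have sub: "submatrix (A * M) I J = A' * M'"
  proof (rule eq_matI)
    show "dim_row (submatrix (A * M) I J) = dim_row (A' * M')"
      "dim_col (submatrix (A * M) I J) = dim_col (A' * M')"
      using dS dA' dM' by simp_all
    fix i j assume "i < dim_row (A' * M')" "j < dim_col (A' * M')"
    hence ij: "i < k" "j < k" using dA' dM' by auto
    have pI: "pick I i < r" using pick_in_set[of i I] ij I cI by auto
    have pJ: "pick J j < c" using pick_in_set[of j J] ij J cJ by auto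
    have "submatrix (A * M) I J $$ (i, j) = (A * M) $$ (pick I i, pick J j)"
      by (rule submatrix_index) (use ij cI cJ eI2 eJ2 in simp_all)
    also have "\<dots> = (\<Sum>l\<in>{0..<N}. A $$ (pick I i, l) * M $$ (l, pick J j))"
      using A M pI pJ by (simp add: scalar_prod_def)
    also have "\<dots> = (A' * M') $$ (i, j)"
    proof -
      have "A' $$ (i, l) = A $$ (pick I i, l)" if "l < N" for l
        unfolding A'_def by (subst submatrix_index) (use ij that cI eI eN in \<open>simp_all add: pick_UNIV\<close>)
      moreover have "M' $$ (l, j) = M $$ (l, pick J j)" if "l < N" for l
        unfolding M'_def by (subst submatrix_index) (use ij that cJ eJ eN2 in \<open>simp_all add: pick_UNIV\<close>)
      ultimately show ?thesis using dA' dM' ij by (simp add: scalar_prod_def)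
    qed
    finally show "submatrix (A * M) I J $$ (i, j) = (A' * M') $$ (i, j)" .
  qed
  let ?F = "{f. (\<forall>i\<in>{0..<k}. f i \<in> {0..<N}) \<and> (\<forall>i. i \<notin> {0..<k} \<longrightarrow> f i = i)}"
  have "det (A' * M') = (\<Sum>f\<in>?F. det (mat\<^sub>r k k (\<lambda>i. A' $$ (i, f i) \<cdot>\<^sub>v row M' (f i))))"
    unfolding mat_mul_finsum_alt[OF A' M']
    by (rule det_linear_rows_sum) (use dM' in auto)
  also have "\<dots> = (\<Sum>f\<in>?F. prod (\<lambda>i. A' $$ (i, f i)) {0..<k} * det (mat\<^sub>r k k (\<lambda>i. row M' (f i))))"
    by (intro sum.cong refl det_rows_mul) (use dM' in auto)
  finally have dAM: "det (A' * M') = \<dots>" .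
  have "g dvd det (mat\<^sub>r k k (\<lambda>i. row M' (f i)))" if "f \<in> ?F" for f
  proof (rule minor_rows_dvd[OF M'])
    fix I' assume I': "I' \<subseteq> {..<N}" "card I' = k"
    have "submatrix M' I' UNIV = submatrix M I' J"
      unfolding M'_def by (rule submatrix_split[symmetric])
    moreover have "det (submatrix M I' J) \<in> minors k M"
      unfolding minors_def using I' J M cJ by auto
    ultimately show "g dvd det (submatrix M' I' UNIV)" using hyp by simp
  next
    fix i assume "i < k" thus "f i < N" using that by auto
  qed
  hence "g dvd det (A' * M')" unfolding dAM by (intro dvd_sum dvd_mult) auto
  thus ?thesis using xIJ sub by simp
qed

lemma minors_transpose_sub:
  fixes M :: "'a::comm_ring_1 mat"
  assumes "x \<in> minors k (transpose_mat M)"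
  shows "x \<in> minors k M"
proof -
  from assms[unfolded minors_def] obtain I J where xIJ: "x = det (submatrix (transpose_mat M) I J)" and I0: "I \<subseteq> {..<dim_row (transpose_mat M)}"
    and J0: "J \<subseteq> {..<dim_col (transpose_mat M)}" and cI: "card I = k" and cJ: "card J = k"
    by blast
  have I: "I \<subseteq> {..<dim_col M}" using I0 by simp
  have J: "J \<subseteq> {..<dim_row M}" using J0 by simp
  have eq: "submatrix (transpose_mat M) I J = transpose_mat (submatrix M J I)"
    by (rule eq_matI) (use pick_lt[OF I] pick_lt[OF J] in \<open>auto simp: dim_submatrix submatrix_index\<close>)
  have sq: "submatrix M J I \<in> carrier_mat k k"
  proof (rule carrier_matI)
    have e1: "{i. i < dim_row M \<and> i \<in> J} = J" using J by auto
    have e2: "{i. i < dim_col M \<and> i \<in> I} = I" using I by auto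
    show "dim_row (submatrix M J I) = k" "dim_col (submatrix M J I) = k"
      unfolding dim_submatrix e1 e2 using cI cJ by simp_all
  qed
  have "x = det (submatrix M J I)" unfolding xIJ eq by (rule det_transpose[OF sq])
  thus ?thesis unfolding minors_def using I J cI cJ by auto
qed

lemma minors_mult_both:
  fixes A M B :: "'a::comm_ring_1 mat"
  assumes A: "A \<in> carrier_mat r N" and M: "M \<in> carrier_mat N c" and B: "B \<in> carrier_mat c s"
    and hyp: "\<And>y. y \<in> minors k M \<Longrightarrow> g dvd y"
    and x: "x \<in> minors k (A * M * B)"
  shows "g dvd x"
proof -
  have AM: "A * M \<in> carrier_mat r c" using A M by auto
  have h1: "g dvd y" if "y \<in> minors k (A * M)" for y
    by (rule minors_mult_left[OF A M hyp that])
  have h2: "g dvd y" if "y \<in> minors k (transpose_mat (A * M))" for y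
    using h1 minors_transpose_sub that by blast
  have "transpose_mat (A * M * B) = transpose_mat B * transpose_mat (A * M)"
    by (rule transpose_mult[OF AM B])
  moreover have "x \<in> minors k (transpose_mat (A * M * B))"
    using minors_transpose_sub[of x k "transpose_mat (A * M * B)"] x by simp
  ultimately have "x \<in> minors k (transpose_mat B * transpose_mat (A * M))" by simp
  moreover have tB: "transpose_mat B \<in> carrier_mat s c" using B by auto
  moreover have tAM: "transpose_mat (A * M) \<in> carrier_mat c r" using AM by auto
  ultimately show ?thesis using minors_mult_left[OF tB tAM h2] by blast
qed

lemma minors_map:
  assumes "comm_ring_hom h" and "x \<in> minors k (map_mat h M)"
  shows "\<exists>y\<in>minors k M. x = h y"
proof -
  from assms(2)[unfolded minors_def] obtain I J where xIJ: "x = det (submatrix (map_mat h M) I J)" and I0: "I \<subseteq> {..<dim_row (map_mat h M)}"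
    and J0: "J \<subseteq> {..<dim_col (map_mat h M)}" and cI: "card I = k" and cJ: "card J = k"
    by blast
  have I: "I \<subseteq> {..<dim_row M}" using I0 by simp
  have J: "J \<subseteq> {..<dim_col M}" using J0 by simp
  have "submatrix (map_mat h M) I J = map_mat h (submatrix M I J)"
    by (rule eq_matI) (use pick_lt[OF I] pick_lt[OF J] in \<open>auto simp: dim_submatrix submatrix_index\<close>)
  hence "x = h (det (submatrix M I J))" unfolding xIJ using comm_ring_hom.hom_det[OF assms(1)] by simp
  thus ?thesis unfolding minors_def using I J cI cJ by auto
qed

lemma minors_map2:
  assumes "comm_ring_hom h" and "y \<in> minors k M"
  shows "h y \<in> minors k (map_mat h M)"
proof -
  from assms(2) obtain I J where xIJ: "y = det (submatrix M I J)" and I: "I \<subseteq> {..<dim_row M}"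
    and J: "J \<subseteq> {..<dim_col M}" and cI: "card I = k" and cJ: "card J = k"
    unfolding minors_def by blast
  have "submatrix (map_mat h M) I J = map_mat h (submatrix M I J)"
    by (rule eq_matI) (use pick_lt[OF I] pick_lt[OF J] in \<open>auto simp: dim_submatrix submatrix_index\<close>)
  hence "h y = det (submatrix (map_mat h M) I J)" unfolding xIJ using comm_ring_hom.hom_det[OF assms(1)] by simp
  thus ?thesis unfolding minors_def using I J cI cJ by auto
qed


definition map3 :: "(bpoly \<Rightarrow> bpoly) \<Rightarrow> triple \<Rightarrow> triple" where
  "map3 f t = (case t of (x,y,z) \<Rightarrow> (f x, f y, f z))"

lemma map3_simp[simp]: "map3 f (x,y,z) = (f x, f y, f z)" by (simp add: map3_def)

lemma mu_transfer:
  assumes fg: "\<And>P. ps a b d g (ps a' b' d' g' P) = P"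
    and gf: "\<And>P. ps a' b' d' g' (ps a b d g P) = P"
    and mu: "mu_basis n \<phi> \<mu> p q"
  shows "mu_basis n (map3 (ps a b d g) \<phi>) \<mu> (map3 (ps a b d g) p) (map3 (ps a b d g) q)"
proof -
  let ?f = "ps a b d g" and ?g = "ps a' b' d' g'"
  obtain a1 a2 a3 where \<phi>: "\<phi> = (a1,a2,a3)" by (cases \<phi>) auto
  obtain p1 p2 p3 where p: "p = (p1,p2,p3)" by (cases p) auto
  obtain q1 q2 q3 where q: "q = (q1,q2,q3)" by (cases q) auto
  have syz_f: "is_syz (map3 ?f \<phi>) (map3 ?f h)" if "is_syz \<phi> h" for h
  proof -
    obtain h1 h2 h3 where h: "h = (h1,h2,h3)" by (cases h) auto
    have "h1 * a1 + h2 * a2 + h3 * a3 = 0" using that by (simp add: is_syz_def h \<phi>)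
    hence "?f (h1 * a1 + h2 * a2 + h3 * a3) = 0" by simp
    thus ?thesis by (simp add: is_syz_def h \<phi> ps_hom.hom_add ps_hom.hom_mult)
  qed
  have syz_g: "is_syz \<phi> (map3 ?g h)" if "is_syz (map3 ?f \<phi>) h" for h
  proof -
    obtain h1 h2 h3 where h: "h = (h1,h2,h3)" by (cases h) auto
    have "h1 * ?f a1 + h2 * ?f a2 + h3 * ?f a3 = 0" using that by (simp add: is_syz_def h \<phi>)
    hence "?g (h1 * ?f a1 + h2 * ?f a2 + h3 * ?f a3) = 0" by simp
    thus ?thesis by (simp add: is_syz_def h \<phi> ps_hom.hom_add ps_hom.hom_mult gf)
  qed
  have lc_f: "map3 ?f (lincomb r p w q) = lincomb (?f r) (map3 ?f p) (?f w) (map3 ?f q)" for r w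
    by (simp add: lincomb_def p q ps_hom.hom_add ps_hom.hom_mult)
  have lc_g: "map3 ?g (lincomb r (map3 ?f p) w (map3 ?f q)) = lincomb (?g r) p (?g w) q" for r w
    by (simp add: lincomb_def p q ps_hom.hom_add ps_hom.hom_mult gf)
  have fgh: "map3 ?f (map3 ?g h) = h" for h by (cases h) (simp add: fg)
  have ggh: "map3 ?g (map3 ?f h) = h" for h by (cases h) (simp add: gf)
  have le: "\<mu> \<le> n - \<mu>" and hp: "homog3 \<mu> p" and hq: "homog3 (n - \<mu>) q"
    and sp: "is_syz \<phi> p" and sq: "is_syz \<phi> q"
    using mu unfolding mu_basis_def by blast+
  have uq: "\<And>h. is_syz \<phi> h \<Longrightarrow> \<exists>!rw. h = lincomb (fst rw) p (snd rw) q"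
    using mu unfolding mu_basis_def by blast
  have "\<exists>!rw. h = lincomb (fst rw) (map3 ?f p) (snd rw) (map3 ?f q)" if h: "is_syz (map3 ?f \<phi>) h" for h
  proof -
    from uq[OF syz_g[OF h]] obtain rw0 where rw0: "map3 ?g h = lincomb (fst rw0) p (snd rw0) q"
      and un: "\<And>rw. map3 ?g h = lincomb (fst rw) p (snd rw) q \<Longrightarrow> rw = rw0" by blast
    show ?thesis
    proof (rule ex1I[of _ "(?f (fst rw0), ?f (snd rw0))"])
      show "h = lincomb (fst (?f (fst rw0), ?f (snd rw0))) (map3 ?f p) (snd (?f (fst rw0), ?f (snd rw0))) (map3 ?f q)"
        using arg_cong[OF rw0, of "map3 ?f"] by (simp add: fgh lc_f)
    next
      fix rw assume "h = lincomb (fst rw) (map3 ?f p) (snd rw) (map3 ?f q)"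
      hence "map3 ?g h = lincomb (?g (fst rw)) p (?g (snd rw)) q" by (simp add: lc_g)
      hence "(?g (fst rw), ?g (snd rw)) = rw0" using un by simp
      hence "?f (?g (fst rw)) = ?f (fst rw0)" "?f (?g (snd rw)) = ?f (snd rw0)" by auto
      thus "rw = (?f (fst rw0), ?f (snd rw0))" by (cases rw) (simp add: fg)
    qed
  qed
  moreover have "homog3 \<mu> (map3 ?f p)" using hp by (simp add: homog3_def p homog_ps)
  moreover have "homog3 (n - \<mu>) (map3 ?f q)" using hq by (simp add: homog3_def q homog_ps)
  ultimately show ?thesis using le syz_f[OF sp] syz_f[OF sq] unfolding mu_basis_def by blast
qed

lemma gcd_transfer:
  fixes f g :: "bpoly \<Rightarrow> bpoly"
  assumes f: "comm_ring_hom f" and g: "comm_ring_hom g" and fg: "\<And>x. f (g x) = x"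
    and G: "is_gcd_of G (minors k S)"
    and S': "S' = A1 * map_mat f S * B1" and S: "S = A2 * map_mat g S' * B2"
    and c1: "A1 \<in> carrier_mat N N" "B1 \<in> carrier_mat N N" "A2 \<in> carrier_mat N N" "B2 \<in> carrier_mat N N"
    and cS: "S \<in> carrier_mat N N" "S' \<in> carrier_mat N N"
  shows "is_gcd_of (f G) (minors k S')"
proof -
  interpret F: comm_ring_hom f by (rule f)
  interpret Gh: comm_ring_hom g by (rule g)
  show ?thesis unfolding is_gcd_of_def
proof (intro conjI allI impI ballI)
  fix x assume x: "x \<in> minors k S'"
  show "f G dvd x"
  proof (rule minors_mult_both[OF c1(1) _ c1(2) _ x[unfolded S']])
    show "map_mat f S \<in> carrier_mat N N" using cS by auto
    fix y assume "y \<in> minors k (map_mat f S)"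
    then obtain z where z: "z \<in> minors k S" "y = f z" using minors_map[OF f] by blast
    have "G dvd z" using G z(1) unfolding is_gcd_of_def by auto
    thus "f G dvd y" using z(2) F.hom_dvd by auto
  qed
next
  fix h assume h: "\<forall>x\<in>minors k S'. h dvd x"
  have "g h dvd y" if "y \<in> minors k S" for y
  proof (rule minors_mult_both[OF c1(3) _ c1(4) _ that[unfolded S]])
    show "map_mat g S' \<in> carrier_mat N N" using cS by auto
    fix y assume "y \<in> minors k (map_mat g S')"
    then obtain z where z: "z \<in> minors k S'" "y = g z" using minors_map[OF g] by blast
    have "h dvd z" using h z(1) by auto
    thus "g h dvd y" using z(2) Gh.hom_dvd by auto
  qed
  hence "g h dvd G" using G unfolding is_gcd_of_def by auto
  hence "f (g h) dvd f G" using F.hom_dvd by auto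
  thus "h dvd f G" using fg by simp
qed
qed



lemma ps_crh: "comm_ring_hom (ps a b d g)"
  by unfold_locales (auto simp: ps_add ps_mult ps_one ps_zero)

theorem lemma3p3:
  fixes n :: nat and a b c :: bpoly and d :: "nat \<Rightarrow> bpoly"
    and \<alpha> \<beta> \<delta> \<gamma> :: complex
  assumes "n \<ge> 3"
    and "homog n a" "homog n b" "homog n c"
    and "coprime3 a b c"
    and "birational_onto_image (a, b, c)"
    and "singular_factors n (a, b, c) d"
    and "\<alpha> * \<gamma> - \<beta> * \<delta> \<noteq> 0"
  shows "singular_factors n
           (psi_sharp \<alpha> \<beta> \<delta> \<gamma> a, psi_sharp \<alpha> \<beta> \<delta> \<gamma> b, psi_sharp \<alpha> \<beta> \<delta> \<gamma> c)
           (\<lambda>i. psi_sharp \<alpha> \<beta> \<delta> \<gamma> (d i))"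
proof -
  define D where "D = \<alpha> * \<gamma> - \<beta> * \<delta>"
  define \<alpha>' where "\<alpha>' = \<gamma> / D"
  define \<beta>' where "\<beta>' = - \<beta> / D"
  define \<delta>' where "\<delta>' = - \<delta> / D"
  define \<gamma>' where "\<gamma>' = \<alpha> / D"
  let ?s = "ps \<alpha> \<beta> \<delta> \<gamma>" and ?t = "ps \<alpha>' \<beta>' \<delta>' \<gamma>'"
  have inv1: "\<And>P. ?t (?s P) = P" unfolding \<alpha>'_def \<beta>'_def \<delta>'_def \<gamma>'_def D_def
    using ps_inv(1)[OF assms(8)] by blast
  have inv2: "\<And>P. ?s (?t P) = P" unfolding \<alpha>'_def \<beta>'_def \<delta>'_def \<gamma>'_def D_def
    using ps_inv(2)[OF assms(8)] by blast
  from assms(7) obtain \<mu> p q where mu: "mu_basis n (a, b, c) \<mu> p q"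
    and hd: "\<forall>i\<in>{1..n}. \<exists>k. homog k (d i)"
    and gcds: "\<forall>i\<in>{1..n}. is_gcd_of (\<Prod>j\<in>{i..n}. d j ^ (j - i + 1))
           (minors (n + 1 - i)
              (sylv_forms \<mu> (pphi_coeff \<mu> p (a, b, c)) (n - \<mu>) (pphi_coeff (n - \<mu>) q (a, b, c))))"
    unfolding singular_factors_def by blast
  obtain p1 p2 p3 where p: "p = (p1,p2,p3)" by (cases p) auto
  obtain q1 q2 q3 where q: "q = (q1,q2,q3)" by (cases q) auto
  have hp: "homog \<mu> p1" "homog \<mu> p2" "homog \<mu> p3"
    using mu unfolding mu_basis_def homog3_def p by auto
  have hq: "homog (n - \<mu>) q1" "homog (n - \<mu>) q2" "homog (n - \<mu>) q3"
    using mu unfolding mu_basis_def homog3_def q by auto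
  have mu': "mu_basis n (?s a, ?s b, ?s c) \<mu> (?s p1, ?s p2, ?s p3) (?s q1, ?s q2, ?s q3)"
    using mu_transfer[OF inv2 inv1 mu] unfolding p q by simp
  define S where "S = sylv_forms \<mu> (pphi_coeff \<mu> (p1,p2,p3) (a, b, c)) (n - \<mu>) (pphi_coeff (n - \<mu>) (q1,q2,q3) (a, b, c))"
  define S' where "S' = sylv_forms \<mu> (pphi_coeff \<mu> (?s p1, ?s p2, ?s p3) (?s a, ?s b, ?s c)) (n - \<mu>)
      (pphi_coeff (n - \<mu>) (?s q1, ?s q2, ?s q3) (?s a, ?s b, ?s c))"
  have M1: "S' = AR \<alpha>' \<beta>' \<delta>' \<gamma>' \<mu> (n - \<mu>) * map_mat ?s S * BR \<alpha> \<beta> \<delta> \<gamma> (\<mu> + (n - \<mu>))"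
    unfolding S'_def S_def by (rule M_lemma[OF inv2 hp hq])
  define sa where "sa = ?s a"
  define sb where "sb = ?s b"
  define sc where "sc = ?s c"
  have M2: "S = AR \<alpha> \<beta> \<delta> \<gamma> \<mu> (n - \<mu>) * map_mat ?t S' * BR \<alpha>' \<beta>' \<delta>' \<gamma>' (\<mu> + (n - \<mu>))"
    using M_lemma[OF inv1 homog_ps[OF hp(1), of \<alpha> \<beta> \<delta> \<gamma>] homog_ps[OF hp(2), of \<alpha> \<beta> \<delta> \<gamma>] homog_ps[OF hp(3), of \<alpha> \<beta> \<delta> \<gamma>]
      homog_ps[OF hq(1), of \<alpha> \<beta> \<delta> \<gamma>] homog_ps[OF hq(2), of \<alpha> \<beta> \<delta> \<gamma>] homog_ps[OF hq(3), of \<alpha> \<beta> \<delta> \<gamma>], where ?a1.0=sa and ?a2.0=sb and ?a3.0=sc]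
    unfolding S'_def S_def sa_def sb_def sc_def inv1 .
  have gcd': "is_gcd_of (\<Prod>j\<in>{i..n}. ?s (d j) ^ (j - i + 1))
           (minors (n + 1 - i) S')" if i: "i \<in> {1..n}" for i
  proof -
    have "(\<Prod>j\<in>{i..n}. ?s (d j) ^ (j - i + 1)) = ?s (\<Prod>j\<in>{i..n}. d j ^ (j - i + 1))"
      by (simp only: ps_hom.hom_prod ps_hom.hom_power)
    moreover have "is_gcd_of (?s (\<Prod>j\<in>{i..n}. d j ^ (j - i + 1))) (minors (n + 1 - i) S')"
    proof (rule gcd_transfer[OF ps_crh ps_crh inv2 _ M1 M2])
      show "is_gcd_of (\<Prod>j\<in>{i..n}. d j ^ (j - i + 1)) (minors (n + 1 - i) S)"
        using gcds i unfolding S_def p q by blast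
    qed (auto simp: AR_def BR_def S_def S'_def)
    ultimately show ?thesis by simp
  qed
  have hd': "\<forall>i\<in>{1..n}. \<exists>k. homog k (?s (d i))"
    using hd homog_ps by blast
  show ?thesis
    unfolding singular_factors_def
    using mu' hd' gcd' unfolding S'_def by blast
qed


end
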